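(* Let $\theta\colon A\to B$ be an $\mathcal O_\infty$-stable $^*$-homomorphism with $A$ separable. Then every non-zero positive element of $\theta(A)$ is properly infinite in $B$.
   Context: A non-zero positive element $b$ of a ${C^*}$-algebra $B$ is properly infinite if $b\oplus b\precsim b\oplus0$ in $M_2(B)$, where $\precsim$ is Cuntz subequivalence ($x\precsim y$ iff $z_n^*yz_n\to x$ for some sequence $z_n$). $B_{(\infty)}=\ell^\infty(\mathbb N,B)/c_0(\mathbb N,B)$; $\theta$ is $\mathcal O_\infty$-stable if $\mathcal O_\infty$ embeds unitally into $(B_{(\infty)}\cap\theta(A)')/\mathrm{Ann}\,\theta(A)$, with $\mathrm{Ann}\,\theta(A)=\{x\in B_{(\infty)}:x\theta(A)=\theta(A)x=0\}$. *)

theory Defs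
  imports "HOL-Analysis.Analysis"
begin

text \<open>The library only has real normed algebras, so complex
scalar multiplication and the involution are added as class parameters.\<close>

class cstar_algebra = banach + real_normed_algebra +
  fixes scaleC :: "complex \<Rightarrow> 'a \<Rightarrow> 'a"
    and cstar :: "'a \<Rightarrow> 'a"
  assumes scaleC_add_right: "scaleC c (x + y) = scaleC c x + scaleC c y"
    and scaleC_add_left: "scaleC (c + d) x = scaleC c x + scaleC d x"
    and scaleC_scaleC: "scaleC c (scaleC d x) = scaleC (c * d) x"
    and scaleC_one: "scaleC 1 x = x"
    and scaleR_scaleC: "scaleR r x = scaleC (complex_of_real r) x"
    and norm_scaleC: "norm (scaleC c x) = cmod c * norm x"
    and mult_scaleC_left: "scaleC c x * y = scaleC c (x * y)"
    and mult_scaleC_right: "x * scaleC c y = scaleC c (x * y)"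
    and cstar_cstar: "cstar (cstar x) = x"
    and cstar_add: "cstar (x + y) = cstar x + cstar y"
    and cstar_scaleC: "cstar (scaleC c x) = scaleC (cnj c) (cstar x)"
    and cstar_mult: "cstar (x * y) = cstar y * cstar x"
    and cstar_identity: "norm (cstar x * x) = (norm x)\<^sup>2"

definition star_hom :: "('a::cstar_algebra \<Rightarrow> 'b::cstar_algebra) \<Rightarrow> bool" where
  "star_hom \<theta> \<longleftrightarrow>
     (\<forall>x y. \<theta> (x + y) = \<theta> x + \<theta> y) \<and>
     (\<forall>c x. \<theta> (scaleC c x) = scaleC c (\<theta> x)) \<and>
     (\<forall>x y. \<theta> (x * y) = \<theta> x * \<theta> y) \<and>
     (\<forall>x. \<theta> (cstar x) = cstar (\<theta> x))"

definition separable_cstar :: "'a::cstar_algebra itself \<Rightarrow> bool" where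
  "separable_cstar _ \<longleftrightarrow> (\<exists>D::'a set. countable D \<and> closure D = UNIV)"

definition positive :: "'a::cstar_algebra \<Rightarrow> bool" where
  "positive b \<longleftrightarrow> (\<exists>x. b = cstar x * x)"

type_synonym 'a m2 = "bool \<Rightarrow> bool \<Rightarrow> 'a"
  \<comment> \<open>index False = first row/column, True = second\<close>

definition m2_mult :: "'a::cstar_algebra m2 \<Rightarrow> 'a m2 \<Rightarrow> 'a m2" where
  "m2_mult X Y = (\<lambda>i j. X i False * Y False j + X i True * Y True j)"

definition m2_star :: "'a::cstar_algebra m2 \<Rightarrow> 'a m2" where
  "m2_star X = (\<lambda>i j. cstar (X j i))"

definition m2_diag :: "'a::cstar_algebra \<Rightarrow> 'a \<Rightarrow> 'a m2" where
  "m2_diag a b = (\<lambda>i j. if i = j then (if i then b else a) else 0)"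

text \<open>Norm convergence in \<open>M_2(B)\<close> (for its C*-norm) is entrywise convergence.\<close>
definition cuntz_below :: "'a::cstar_algebra m2 \<Rightarrow> 'a m2 \<Rightarrow> bool" where
  "cuntz_below X Y \<longleftrightarrow>
     (\<exists>z :: nat \<Rightarrow> 'a m2. \<forall>i j.
        (\<lambda>n. m2_mult (m2_mult (m2_star (z n)) Y) (z n) i j) \<longlonglongrightarrow> X i j)"

definition properly_infinite :: "'a::cstar_algebra \<Rightarrow> bool" where
  "properly_infinite b \<longleftrightarrow> b \<noteq> 0 \<and> positive b \<and>
     cuntz_below (m2_diag b b) (m2_diag b 0)"

text \<open>Elements of \<open>B_(\<infinity>) = \<ell>\<^sup>\<infinity>(\<nat>,B)/c\<^sub>0(\<nat>,B)\<close> are represented by bounded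
sequences.  \<open>rel_comm \<theta> x\<close>: the class of x lies in \<open>B_(\<infinity>) \<inter> \<theta>(A)'\<close>.
\<open>ann \<theta> x\<close>: the class of x lies in \<open>Ann \<theta>(A)\<close> (this contains \<open>c\<^sub>0\<close>).\<close>

definition rel_comm :: "('a::cstar_algebra \<Rightarrow> 'b::cstar_algebra) \<Rightarrow> (nat \<Rightarrow> 'b) \<Rightarrow> bool" where
  "rel_comm \<theta> x \<longleftrightarrow> bounded (range x) \<and>
     (\<forall>a. (\<lambda>n. x n * \<theta> a - \<theta> a * x n) \<longlonglongrightarrow> 0)"

definition ann :: "('a::cstar_algebra \<Rightarrow> 'b::cstar_algebra) \<Rightarrow> (nat \<Rightarrow> 'b) \<Rightarrow> bool" where
  "ann \<theta> x \<longleftrightarrow> bounded (range x) \<and>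
     (\<forall>a. (\<lambda>n. x n * \<theta> a) \<longlonglongrightarrow> 0 \<and> (\<lambda>n. \<theta> a * x n) \<longlonglongrightarrow> 0)"

text \<open>\<open>O\<^sub>\<infinity>\<close> embeds unitally into \<open>D = (B_(\<infinity>) \<inter> \<theta>(A)')/Ann \<theta>(A)\<close>:
by the universal property of \<open>O\<^sub>\<infinity>\<close> (generated by isometries \<open>s\<^sub>i\<close> with
\<open>s\<^sub>i\<^sup>* s\<^sub>j = \<delta>\<^sub>i\<^sub>j 1\<close>) and its simplicity, this means: D is unital with non-zero
unit (represented by e) and contains such a sequence of isometries
(represented by the \<open>s i\<close>).\<close>

definition Oinf_stable :: "('a::cstar_algebra \<Rightarrow> 'b::cstar_algebra) \<Rightarrow> bool" where
  "Oinf_stable \<theta> \<longleftrightarrow>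
     (\<exists>(e :: nat \<Rightarrow> 'b) (s :: nat \<Rightarrow> nat \<Rightarrow> 'b).
        rel_comm \<theta> e \<and> \<not> ann \<theta> e \<and>
        (\<forall>x. rel_comm \<theta> x \<longrightarrow>
              ann \<theta> (\<lambda>n. e n * x n - x n) \<and> ann \<theta> (\<lambda>n. x n * e n - x n)) \<and>
        (\<forall>i. rel_comm \<theta> (s i)) \<and>
        (\<forall>i j. ann \<theta> (\<lambda>n. cstar (s i n) * s j n - (if i = j then e n else 0))))"

end

theory Submission
  imports Defs "HOL-Computational_Algebra.Polynomial"
begin

lemma scaleC_zero_left[simp]: "scaleC 0 (x::'a::cstar_algebra) = 0"
  using scaleC_add_left[of 0 0 x] by simp
lemma scaleC_zero_right[simp]: "scaleC c (0::'a::cstar_algebra) = 0"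
  using scaleC_add_right[of c 0 0] by simp
lemma scaleC_minus_right: "scaleC c (- (x::'a::cstar_algebra)) = - scaleC c x"
  using scaleC_add_right[of c x "-x"] by (simp add: add_eq_0_iff)
lemma scaleC_minus_left: "scaleC (- c) (x::'a::cstar_algebra) = - scaleC c x"
  using scaleC_add_left[of c "-c" x] by (simp add: add_eq_0_iff)
lemma scaleC_diff_right: "scaleC c ((x::'a::cstar_algebra) - y) = scaleC c x - scaleC c y"
  using scaleC_add_right[of c x "-y"] by (simp add: scaleC_minus_right)
lemma scaleC_diff_left: "scaleC (c - d) (x::'a::cstar_algebra) = scaleC c x - scaleC d x"
  using scaleC_add_left[of c "-d" x] by (simp add: scaleC_minus_left)
lemma scaleC_of_real: "scaleC (complex_of_real r) (x::'a::cstar_algebra) = r *\<^sub>R x"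
  by (simp add: scaleR_scaleC)
lemma scaleC_sum_right: "scaleC c (sum f A) = (\<Sum>i\<in>A. scaleC c (f i::'a::cstar_algebra))"
  by (induct A rule: infinite_finite_induct) (auto simp: scaleC_add_right)
lemma scaleC_sum_left: "scaleC (sum f A) (x::'a::cstar_algebra) = (\<Sum>i\<in>A. scaleC (f i) x)"
  by (induct A rule: infinite_finite_induct) (auto simp: scaleC_add_left)

lemma cstar_zero[simp]: "cstar (0::'a::cstar_algebra) = 0"
  using cstar_add[of "0::'a" 0] by simp
lemma cstar_minus: "cstar (- (x::'a::cstar_algebra)) = - cstar x"
  using cstar_add[of x "-x"] by (simp add: add_eq_0_iff)
lemma cstar_diff: "cstar ((x::'a::cstar_algebra) - y) = cstar x - cstar y"
  using cstar_add[of x "-y"] by (simp add: cstar_minus)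
lemma cstar_scaleR: "cstar (r *\<^sub>R (x::'a::cstar_algebra)) = r *\<^sub>R cstar x"
  by (simp add: scaleR_scaleC cstar_scaleC)
lemma cstar_sum: "cstar (sum f A) = (\<Sum>i\<in>A. cstar (f i::'a::cstar_algebra))"
  by (induct A rule: infinite_finite_induct) (auto simp: cstar_add)
lemma cstar_inj: "cstar (x::'a::cstar_algebra) = cstar y \<longleftrightarrow> x = y"
  by (metis cstar_cstar)

lemma norm_cstar_le: "norm (x::'a::cstar_algebra) \<le> norm (cstar x)"
proof (cases "x = 0")
  case False
  have "(norm x)^2 \<le> norm (cstar x) * norm x"
    using cstar_identity[of x] norm_mult_ineq[of "cstar x" x] by simp
  then show ?thesis using False by (simp add: power2_eq_square)
qed simp

lemma norm_cstar[simp]: "norm (cstar (x::'a::cstar_algebra)) = norm x"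
  using norm_cstar_le[of x] norm_cstar_le[of "cstar x"] by (simp add: cstar_cstar)

lemma cstar_identity2: "norm ((x::'a::cstar_algebra) * cstar x) = (norm x)^2"
  using cstar_identity[of "cstar x"] by (simp add: cstar_cstar)

lemma bounded_linear_cstar: "bounded_linear (cstar :: 'a::cstar_algebra \<Rightarrow> 'a)"
  by (rule bounded_linear_intro[where K=1]) (auto simp: cstar_add cstar_scaleR)

lemma norm_le_from_mult:
  fixes x :: "'a::cstar_algebra"
  assumes "K \<ge> 0" "\<And>y. norm (x * y) \<le> K * norm y"
  shows "norm x \<le> K"
proof (cases "x = 0")
  case False
  have "(norm x)^2 \<le> K * norm x"
    using cstar_identity2[of x] assms(2)[of "cstar x"] by simp
  then show ?thesis using False by (simp add: power2_eq_square)
qed (use assms in simp)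

section \<open>Unitization\<close>

datatype 'b ue = UE (ues: complex) (uev: 'b)

lemma ue_eqI: "ues P = ues Q \<Longrightarrow> uev P = uev Q \<Longrightarrow> P = Q"
  by (cases P; cases Q) auto

instantiation ue :: (cstar_algebra) ring_1
begin
definition "0 = UE 0 0"
definition "1 = UE 1 0"
definition "P + Q = UE (ues P + ues Q) (uev P + uev Q)"
definition "- P = UE (- ues P) (- uev P)"
definition "P - Q = UE (ues P - ues Q) (uev P - uev Q)"
definition "P * Q = UE (ues P * ues Q) (scaleC (ues P) (uev Q) + scaleC (ues Q) (uev P) + uev P * uev Q)"
instance
proof
  fix a b c :: "'a ue"
  show "a * b * c = a * (b * c)"
    by (rule ue_eqI) (simp_all add: times_ue_def scaleC_add_right scaleC_scaleC mult_scaleC_left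
        mult_scaleC_right distrib_left distrib_right mult.assoc ac_simps)
  show "a + b + c = a + (b + c)" by (simp add: plus_ue_def ac_simps)
  show "a + b = b + a" by (simp add: plus_ue_def ac_simps)
  show "0 + a = a" by (rule ue_eqI) (simp_all add: plus_ue_def zero_ue_def)
  show "- a + a = 0" by (rule ue_eqI) (simp_all add: plus_ue_def zero_ue_def uminus_ue_def)
  show "a - b = a + - b" by (rule ue_eqI) (simp_all add: plus_ue_def minus_ue_def uminus_ue_def)
  show "1 * a = a" by (rule ue_eqI) (simp_all add: times_ue_def one_ue_def scaleC_one)
  show "a * 1 = a" by (rule ue_eqI) (simp_all add: times_ue_def one_ue_def scaleC_one)
  show "(a + b) * c = a * c + b * c"
    by (rule ue_eqI) (simp_all add: times_ue_def plus_ue_def scaleC_add_right scaleC_add_left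
        distrib_left distrib_right ac_simps)
  show "a * (b + c) = a * b + a * c"
    by (rule ue_eqI) (simp_all add: times_ue_def plus_ue_def scaleC_add_right scaleC_add_left
        distrib_left distrib_right ac_simps)
  show "(0::'a ue) \<noteq> 1" by (simp add: zero_ue_def one_ue_def)
qed
end

lemma ues_simps[simp]:
  "ues (0::'a::cstar_algebra ue) = 0" "ues (1::'a ue) = 1"
  "ues (P + Q) = ues P + ues Q" "ues (P - Q) = ues P - ues Q" "ues (- P) = - ues P"
  "ues (P * Q) = ues P * ues Q"
  by (simp_all add: zero_ue_def one_ue_def plus_ue_def minus_ue_def uminus_ue_def times_ue_def)

lemma uev_simps[simp]:
  "uev (0::'a::cstar_algebra ue) = 0" "uev (1::'a ue) = 0"
  "uev (P + Q) = uev P + uev Q" "uev (P - Q) = uev P - uev Q" "uev (- P) = - uev P"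
  "uev (P * Q) = scaleC (ues P) (uev Q) + scaleC (ues Q) (uev P) + uev P * uev Q"
  by (simp_all add: zero_ue_def one_ue_def plus_ue_def minus_ue_def uminus_ue_def times_ue_def)

lemma ues_power[simp]: "ues ((P::'a::cstar_algebra ue) ^ n) = ues P ^ n"
  by (induct n) auto

definition act :: "'a::cstar_algebra ue \<Rightarrow> 'a \<Rightarrow> 'a" where
  "act P y = scaleC (ues P) y + uev P * y"
definition ract :: "'a::cstar_algebra \<Rightarrow> 'a ue \<Rightarrow> 'a" where
  "ract y P = scaleC (ues P) y + y * uev P"
definition ustar :: "'a::cstar_algebra ue \<Rightarrow> 'a ue" where
  "ustar P = UE (cnj (ues P)) (cstar (uev P))"
definition ucon :: "complex \<Rightarrow> 'a::cstar_algebra ue" where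
  "ucon c = UE c 0"
definition uemb :: "'a::cstar_algebra \<Rightarrow> 'a ue" where
  "uemb x = UE 0 x"

lemma ucon_simps[simp]: "ues (ucon c) = c" "uev (ucon c) = 0" "ues (uemb x) = 0" "uev (uemb x) = x"
  "ues (ustar P) = cnj (ues P)" "uev (ustar P) = cstar (uev P)"
  by (simp_all add: ucon_def uemb_def ustar_def)

lemma act_mult: "act (P * Q) y = act P (act Q y)"
  by (simp add: act_def scaleC_add_right scaleC_scaleC mult_scaleC_left mult_scaleC_right
      distrib_left distrib_right mult.assoc ac_simps scaleC_add_left)
lemma act_add: "act (P + Q) y = act P y + act Q y"
  by (simp add: act_def scaleC_add_left distrib_right ac_simps)
lemma act_diff: "act (P - Q) y = act P y - act Q y"
  by (simp add: act_def scaleC_diff_left left_diff_distrib)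
lemma act_uminus: "act (- P) y = - act P y"
  by (simp add: act_def scaleC_minus_left)
lemma act_one[simp]: "act 1 y = y" by (simp add: act_def scaleC_one)
lemma act_zero[simp]: "act 0 y = 0" by (simp add: act_def)
lemma act_ucon: "act (ucon c) y = scaleC c y" by (simp add: act_def)
lemma act_uemb: "act (uemb x) y = x * y" by (simp add: act_def)
lemma act_sum: "act (sum f A) y = (\<Sum>i\<in>A. act (f i) y)"
  by (induct A rule: infinite_finite_induct) (auto simp: act_add)
lemma act_mult_right: "act P (y * z) = act P y * z"
  by (simp add: act_def mult_scaleC_left distrib_right mult.assoc)
lemma ract_mult_left: "y * act P z = ract y P * z"
  by (simp add: act_def ract_def mult_scaleC_left mult_scaleC_right distrib_left distrib_right mult.assoc)
lemma cstar_act: "cstar (act P y) = ract (cstar y) (ustar P)"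
  by (simp add: act_def ract_def cstar_add cstar_scaleC cstar_mult)
lemma ustar_ustar[simp]: "ustar (ustar P) = P"
  by (rule ue_eqI) (simp_all add: cstar_cstar)
lemma ustar_mult: "ustar (P * Q) = ustar Q * ustar P"
  by (rule ue_eqI) (simp_all add: cstar_add cstar_scaleC cstar_mult ac_simps)
lemma ustar_add: "ustar (P + Q) = ustar P + ustar Q"
  by (rule ue_eqI) (simp_all add: cstar_add)
lemma ustar_diff: "ustar (P - Q) = ustar P - ustar Q"
  by (rule ue_eqI) (simp_all add: cstar_diff)
lemma ustar_one[simp]: "ustar 1 = 1" by (rule ue_eqI) simp_all
lemma ustar_ucon: "ustar (ucon c) = ucon (cnj c)" by (rule ue_eqI) simp_all
lemma ustar_power: "ustar (P ^ n) = (ustar P) ^ n"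
  by (induct n) (simp_all add: ustar_mult power_commutes)
lemma ucon_mult: "ucon c * P = UE (c * ues P) (scaleC c (uev P))"
  by (rule ue_eqI) simp_all
lemma ucon_commute: "ucon c * P = P * ucon c"
  by (rule ue_eqI) simp_all
lemma ucon_ucon: "ucon c * ucon d = ucon (c * d)"
  by (rule ue_eqI) simp_all
lemma ucon_add: "ucon (c + d) = ucon c + ucon d"
  by (rule ue_eqI) simp_all
lemma ucon_one[simp]: "ucon 1 = 1" by (rule ue_eqI) simp_all
lemma ucon_zero[simp]: "ucon 0 = 0" by (rule ue_eqI) simp_all

definition bnd :: "'a::cstar_algebra ue \<Rightarrow> real \<Rightarrow> bool" where
  "bnd P K \<longleftrightarrow> (\<forall>y. norm (act P y) \<le> K * norm y)"

lemma unitary_norm: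
  fixes U :: "'a::cstar_algebra ue"
  assumes "ustar U * U = 1"
  shows "norm (act U y) = norm y"
proof -
  have "(norm (act U y))^2 = norm (cstar (act U y) * act U y)"
    by (simp add: cstar_identity)
  also have "\<dots> = norm (cstar y * act (ustar U * U) y)"
    by (simp add: cstar_act ract_mult_left act_mult)
  also have "\<dots> = (norm y)^2" using assms by (simp add: cstar_identity)
  finally show ?thesis using power2_eq_iff_nonneg[of "norm (act U y)" "norm y"] by simp
qed

lemma le_cancel_aux:
  fixes a b :: real
  assumes "a^2 \<le> b * a" "a \<ge> 0" "b \<ge> 0"
  shows "a \<le> b"
proof (cases "a = 0")
  case False
  then have "a > 0" using assms by simp
  from assms(1) have "a * a \<le> b * a" by (simp add: power2_eq_square)
  then show ?thesis using \<open>a > 0\<close> by simp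
qed (use assms in simp)

lemma bnd_ustar:
  fixes P :: "'a::cstar_algebra ue"
  assumes "bnd P K" "K \<ge> 0"
  shows "bnd (ustar P) K"
  unfolding bnd_def
proof
  fix y
  let ?z = "act (ustar P) y"
  have "(norm ?z)^2 = norm (cstar ?z * ?z)" by (simp add: cstar_identity)
  also have "\<dots> = norm (cstar y * act P ?z)"
    by (simp add: cstar_act ract_mult_left)
  also have "\<dots> \<le> norm y * norm (act P ?z)"
    using norm_mult_ineq[of "cstar y" "act P ?z"] by simp
  also have "\<dots> \<le> norm y * (K * norm ?z)"
    using assms(1) unfolding bnd_def by (intro mult_left_mono) auto
  finally have "(norm ?z)^2 \<le> (K * norm y) * norm ?z" by (simp add: ac_simps)
  then show "norm ?z \<le> K * norm y"
    by (rule le_cancel_aux) (use assms in auto)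
qed

lemma bnd_sa_sq:
  fixes P :: "'a::cstar_algebra ue"
  assumes "ustar P = P" "bnd (P * P) c" "c \<ge> 0"
  shows "bnd P (sqrt c)"
  unfolding bnd_def
proof
  fix y
  have "(norm (act P y))^2 = norm (cstar (act P y) * act P y)" by (simp add: cstar_identity)
  also have "\<dots> = norm (cstar y * act (P * P) y)"
    by (simp add: cstar_act ract_mult_left act_mult assms(1))
  also have "\<dots> \<le> norm y * norm (act (P * P) y)"
    using norm_mult_ineq[of "cstar y" "act (P*P) y"] by simp
  also have "\<dots> \<le> norm y * (c * norm y)"
    using assms(2) unfolding bnd_def by (intro mult_left_mono) auto
  also have "\<dots> = (sqrt c * norm y)^2"
    using assms(3) by (simp add: power_mult_distrib power2_eq_square)
  finally show "norm (act P y) \<le> sqrt c * norm y"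
    by (rule power2_le_imp_le) (use assms in auto)
qed

lemma bnd_pow2:
  fixes P :: "'a::cstar_algebra ue"
  assumes "ustar P = P" "K \<ge> 0" "bnd (P ^ (2^m)) (K ^ (2^m))"
  shows "bnd P K"
  using assms
proof (induct m arbitrary: P K)
  case 0
  then show ?case by simp
next
  case (Suc m)
  have "P ^ (2 ^ Suc m) = (P * P) ^ (2 ^ m)"
    by (simp add: power_mult power2_eq_square[symmetric] mult.commute)
  moreover have "K ^ (2 ^ Suc m) = (K^2) ^ (2 ^ m)"
    by (simp add: power_mult power2_eq_square[symmetric] mult.commute)
  ultimately have "bnd (P * P) (K^2)"
    using Suc.hyps[of "P * P" "K^2"] Suc.prems by (simp add: ustar_mult)
  then have "bnd P (sqrt (K^2))" by (rule bnd_sa_sq[OF Suc.prems(1)]) simp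
  then show ?case using Suc.prems by simp
qed

lemma bnd_mult: "bnd P K \<Longrightarrow> bnd Q L \<Longrightarrow> K \<ge> 0 \<Longrightarrow> bnd (P * Q) (K * L)"
  unfolding bnd_def act_mult
  by (metis (no_types, opaque_lifting) mult.assoc mult_left_mono order_trans)

lemma bnd_one: "bnd 1 1" by (simp add: bnd_def)

lemma bnd_power: "bnd P K \<Longrightarrow> K \<ge> 0 \<Longrightarrow> bnd (P ^ n) (K ^ n)"
  by (induct n) (auto simp: bnd_one intro: bnd_mult)

lemma bnd_mono: "bnd P K \<Longrightarrow> K \<le> L \<Longrightarrow> bnd P L"
  unfolding bnd_def by (meson mult_right_mono norm_ge_zero order_trans)

lemma bnd_unitary: "ustar U * U = 1 \<Longrightarrow> bnd U 1"
  unfolding bnd_def using unitary_norm[of U] by simp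

lemma bnd_elem:
  fixes x :: "'a::cstar_algebra"
  assumes "bnd (uemb x) K" "K \<ge> 0"
  shows "norm x \<le> K"
proof (rule norm_le_from_mult[OF assms(2)])
  fix y show "norm (x * y) \<le> K * norm y" using assms(1) by (simp add: bnd_def act_uemb)
qed

section \<open>Square root series\<close>

function sqc :: "nat \<Rightarrow> real" where
  "sqc 0 = 1/2"
| "sqc (Suc n) = (\<Sum>i\<le>n. sqc i * sqc (n - i)) / 2"
  by pat_completeness auto
termination by (relation "Wellfounded.measure id") auto

lemma sqc_nonneg: "sqc n \<ge> 0"
  by (induct n rule: nat_less_induct) (case_tac n; auto intro!: sum_nonneg)

lemma sqc_psum: "(\<Sum>n\<le>N. sqc n) \<le> 1"
proof (induct N)
  case 0 then show ?case by simp
next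
  case (Suc N)
  have tri: "(\<Sum>k\<le>N. \<Sum>i\<le>k. sqc i * sqc (k - i)) \<le> (\<Sum>n\<le>N. sqc n) * (\<Sum>n\<le>N. sqc n)"
  proof -
    have "(\<Sum>k\<le>N. \<Sum>i\<le>k. sqc i * sqc (k - i)) = (\<Sum>(i, j)\<in>{(i, j). i + j \<le> N}. sqc i * sqc j)"
      by (rule sum.triangle_reindex_eq[symmetric])
    also have "\<dots> \<le> (\<Sum>(i, j)\<in>{..N} \<times> {..N}. sqc i * sqc j)"
      by (rule sum_mono2) (auto simp: sqc_nonneg)
    also have "\<dots> = (\<Sum>n\<le>N. sqc n) * (\<Sum>n\<le>N. sqc n)"
      by (simp add: sum_product sum.cartesian_product)
    finally show ?thesis .
  qed
  have "(\<Sum>n\<le>Suc N. sqc n) = sqc 0 + (\<Sum>n\<le>N. sqc (Suc n))"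
    by (rule sum.atMost_Suc_shift)
  also have "\<dots> = 1/2 + (\<Sum>k\<le>N. \<Sum>i\<le>k. sqc i * sqc (k - i)) / 2"
    by (simp add: sum_divide_distrib)
  also have "\<dots> \<le> 1/2 + ((\<Sum>n\<le>N. sqc n) * (\<Sum>n\<le>N. sqc n)) / 2"
    using tri by simp
  also have "\<dots> \<le> 1"
  proof -
    have "0 \<le> (\<Sum>n\<le>N. sqc n)" by (simp add: sum_nonneg sqc_nonneg)
    then have "(\<Sum>n\<le>N. sqc n) * (\<Sum>n\<le>N. sqc n) \<le> 1 * 1"
      using Suc.hyps by (intro mult_mono) auto
    then show ?thesis by simp
  qed
  finally show ?case .
qed

lemma summable_sqc: "summable sqc"
proof (rule summableI_nonneg_bounded[where x=1])
  fix n
  show "sum sqc {..<n} \<le> 1"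
  proof (cases n)
    case (Suc m) then show ?thesis using sqc_psum[of m] by (simp add: lessThan_Suc_atMost)
  qed simp
qed (simp add: sqc_nonneg)

primrec pw :: "'a::cstar_algebra \<Rightarrow> nat \<Rightarrow> 'a" where
  "pw x 0 = x"
| "pw x (Suc n) = x * pw x n"

lemma pw_commute: "pw x n * x = x * pw x n"
  by (induct n) (simp_all add: mult.assoc)

lemma pw_mult: "pw x i * pw x j = pw x (i + j + 1)"
  by (induct i) (simp_all add: mult.assoc pw_commute)

lemma pw_norm: "norm x \<le> 1 \<Longrightarrow> norm (pw x n) \<le> 1"
proof (induct n)
  case (Suc n)
  have "norm (pw x (Suc n)) \<le> norm x * norm (pw x n)" by (simp add: norm_mult_ineq)
  also have "\<dots> \<le> 1 * 1" using Suc by (intro mult_mono) auto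
  finally show ?case by simp
qed simp

lemma pw_cstar: "cstar x = x \<Longrightarrow> cstar (pw x n) = pw x n"
  by (induct n) (simp_all add: cstar_mult pw_commute)

lemma pw_comm_gen: "x * y = y * x \<Longrightarrow> pw x n * y = y * pw x n"
  by (induct n) (simp_all add: mult.assoc, metis mult.assoc)

lemma sqrt_exists:
  fixes h :: "'a::cstar_algebra"
  assumes "norm h \<le> 1" "cstar h = h"
  shows "\<exists>t. cstar t = t \<and> t * h = h * t \<and> t * t = 2 *\<^sub>R t - h * h"
proof -
  define hh where "hh = h * h"
  have nhh: "norm hh \<le> 1"
  proof -
    have "norm hh \<le> norm h * norm h" unfolding hh_def by (rule norm_mult_ineq)
    also have "\<dots> \<le> 1 * 1" using assms(1) by (intro mult_mono) auto
    finally show ?thesis by simp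
  qed
  define f where "f n = sqc n *\<^sub>R pw hh n" for n
  have sn: "summable (\<lambda>n. norm (f n))"
  proof (rule summable_comparison_test[OF _ summable_sqc])
    show "\<exists>N. \<forall>n\<ge>N. norm (norm (f n)) \<le> sqc n"
    proof (intro exI allI impI)
      fix n
      have "norm (f n) = sqc n * norm (pw hh n)" by (simp add: f_def sqc_nonneg)
      also have "\<dots> \<le> sqc n * 1" using pw_norm[OF nhh] sqc_nonneg by (intro mult_left_mono) auto
      finally show "norm (norm (f n)) \<le> sqc n" by simp
    qed
  qed
  then have sf: "summable f" by (rule summable_norm_cancel)
  define t where "t = suminf f"
  have "cstar t = (\<Sum>n. cstar (f n))"
    unfolding t_def by (rule bounded_linear.suminf[OF bounded_linear_cstar sf])
  also have "\<dots> = t"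
    unfolding t_def f_def using assms(2)
    by (simp add: cstar_scaleR pw_cstar hh_def cstar_mult)
  finally have st: "cstar t = t" .
  have "t * h = (\<Sum>n. f n * h)"
    unfolding t_def by (rule suminf_mult2[OF sf])
  also have "\<dots> = (\<Sum>n. h * f n)"
    by (simp add: f_def pw_comm_gen hh_def mult.assoc)
  also have "\<dots> = h * t"
    unfolding t_def using suminf_mult[OF sf, of h] by simp
  finally have ct: "t * h = h * t" .
  have "t * t = (\<Sum>k. \<Sum>i\<le>k. f i * f (k - i))"
    unfolding t_def by (rule Cauchy_product[OF sn sn])
  also have "\<dots> = (\<Sum>k. (2 * sqc (Suc k)) *\<^sub>R pw hh (Suc k))"
  proof -
    have "(\<Sum>i\<le>k. f i * f (k - i)) = (2 * sqc (Suc k)) *\<^sub>R pw hh (Suc k)" for k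
    proof -
      have "(\<Sum>i\<le>k. f i * f (k - i)) = (\<Sum>i\<le>k. (sqc i * sqc (k - i)) *\<^sub>R pw hh (Suc k))"
        by (intro sum.cong) (auto simp: f_def pw_mult)
      also have "\<dots> = (\<Sum>i\<le>k. sqc i * sqc (k - i)) *\<^sub>R pw hh (Suc k)"
        by (simp add: scaleR_sum_left)
      finally show ?thesis by simp
    qed
    then show ?thesis by simp
  qed
  also have "\<dots> = 2 *\<^sub>R (\<Sum>k. f (Suc k))"
  proof -
    have "summable (\<lambda>k. f (Suc k))" using sf by (simp add: summable_Suc_iff)
    then have "(\<Sum>k. 2 *\<^sub>R f (Suc k)) = 2 *\<^sub>R (\<Sum>k. f (Suc k))"
      by (rule suminf_scaleR_right[symmetric])
    then show ?thesis by (simp add: f_def)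
  qed
  also have "\<dots> = 2 *\<^sub>R t - hh"
    using suminf_split_head[OF sf] by (simp add: t_def f_def scaleR_diff_right)
  finally have "t * t = 2 *\<^sub>R t - h * h" by (simp add: hh_def)
  with st ct show ?thesis by blast
qed

lemma uemb_mult: "uemb x * uemb y = uemb (x * y)"
  by (rule ue_eqI) simp_all
lemma uemb_add: "uemb (x + y) = uemb x + uemb y"
  by (rule ue_eqI) simp_all
lemma uemb_diff: "uemb (x - y) = uemb x - uemb y"
  by (rule ue_eqI) simp_all
lemma uemb_zero[simp]: "uemb 0 = 0"
  by (rule ue_eqI) simp_all
lemma uemb_scaleR: "uemb (r *\<^sub>R x) = ucon (complex_of_real r) * uemb x"
  by (rule ue_eqI) (simp_all add: scaleC_of_real)
lemma ustar_uemb: "ustar (uemb x) = uemb (cstar x)"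
  by (rule ue_eqI) simp_all

lemma bnd_comb:
  fixes P Q :: "'a::cstar_algebra ue"
  assumes "bnd P 1" "bnd Q 1" "cmod c \<le> 1/2"
  shows "bnd (ucon c * (P + Q)) 1" "bnd (ucon c * (P - Q)) 1"
proof -
  have *: "norm (scaleC c z) \<le> norm y" if "norm z \<le> 2 * norm y" for z y :: 'a
  proof -
    have "norm (scaleC c z) = cmod c * norm z" by (rule norm_scaleC)
    also have "\<dots> \<le> (1/2) * (2 * norm y)" using assms(3) that by (intro mult_mono) auto
    finally show ?thesis by simp
  qed
  show "bnd (ucon c * (P + Q)) 1" unfolding bnd_def
  proof
    fix y
    have "norm (act P y + act Q y) \<le> 2 * norm y"
      using norm_triangle_ineq[of "act P y" "act Q y"] assms(1,2) unfolding bnd_def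
      by (smt (verit, best))
    then show "norm (act (ucon c * (P + Q)) y) \<le> 1 * norm y"
      using * by (simp add: act_mult act_ucon act_add)
  qed
  show "bnd (ucon c * (P - Q)) 1" unfolding bnd_def
  proof
    fix y
    have "norm (act P y - act Q y) \<le> 2 * norm y"
      using norm_triangle_ineq4[of "act P y" "act Q y"] assms(1,2) unfolding bnd_def
      by (smt (verit, best))
    then show "norm (act (ucon c * (P - Q)) y) \<le> 1 * norm y"
      using * by (simp add: act_mult act_ucon act_diff)
  qed
qed

lemma unitary_rel:
  fixes k \<tau> :: "'a::cstar_algebra"
  assumes sk: "cstar k = k" and st: "cstar \<tau> = \<tau>" and c: "\<tau> * k = k * \<tau>"
    and r: "\<tau> * \<tau> = 2 *\<^sub>R \<tau> - k * k"
  defines "w \<equiv> 1 - uemb \<tau>" and "U \<equiv> uemb k + ucon \<i> * (1 - uemb \<tau>)"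
  shows "ustar U * U = 1" "U * ustar U = 1" "ustar w = w" "uemb k * w = w * uemb k"
    "uemb k = ucon (1/2) * (U + ustar U)" "w = ucon (1/(2*\<i>)) * (U - ustar U)"
    "ustar (uemb k) = uemb k"
proof -
  let ?K = "uemb k" and ?c = "ucon \<i> :: 'a ue"
  have U: "U = ?K + ?c * w" by (simp add: U_def w_def)
  show sw: "ustar w = w" by (simp add: w_def ustar_diff ustar_uemb st)
  show sK: "ustar ?K = ?K" by (simp add: ustar_uemb sk)
  show Kw: "?K * w = w * ?K"
    by (simp add: w_def algebra_simps uemb_mult c)
  have KKww: "?K * ?K + w * w = 1"
  proof -
    have "uemb \<tau> * uemb \<tau> = uemb \<tau> + uemb \<tau> - ?K * ?K"
      by (simp add: uemb_mult r uemb_diff uemb_add scaleR_2)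
    then show ?thesis by (simp add: w_def algebra_simps)
  qed
  have sU: "ustar U = ?K - ?c * w"
  proof -
    have "ustar U = ?K + w * ucon (- \<i>)"
      by (simp add: U ustar_add ustar_mult sw sK ustar_ucon)
    also have "\<dots> = ?K - ?c * w"
      by (simp add: ucon_commute[symmetric] ucon_mult minus_ue_def plus_ue_def scaleC_minus_left)
    finally show ?thesis .
  qed
  have cc: "?c * ?c = - 1"
    by (rule ue_eqI) simp_all
  have m1: "?K * (?c * w) = ?c * (?K * w)"
    by (metis mult.assoc ucon_commute)
  have m2: "(?c * w) * ?K = ?c * (?K * w)"
    by (metis mult.assoc Kw)
  have m3: "(?c * w) * (?c * w) = - (w * w)"
    by (metis (no_types, lifting) mult.assoc ucon_commute cc mult_minus1)
  show "ustar U * U = 1"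
  proof -
    have "ustar U * U = ?K * ?K + ?K * (?c * w) - (?c * w) * ?K - (?c * w) * (?c * w)"
      unfolding sU by (simp add: U algebra_simps)
    also have "\<dots> = ?K * ?K + w * w" by (simp add: m1 m2 m3)
    finally show ?thesis using KKww by simp
  qed
  show "U * ustar U = 1"
  proof -
    have "U * ustar U = ?K * ?K - ?K * (?c * w) + (?c * w) * ?K - (?c * w) * (?c * w)"
      unfolding sU by (simp add: U algebra_simps)
    also have "\<dots> = ?K * ?K + w * w" by (simp add: m1 m2 m3)
    finally show ?thesis using KKww by simp
  qed
  show "?K = ucon (1/2) * (U + ustar U)"
  proof -
    have "U + ustar U = ?K + ?K"
      unfolding sU by (simp add: U)
    moreover have "ucon (1/2) * (?K + ?K) = ucon (1/2 + 1/2) * ?K"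
      by (simp only: ucon_add distrib_left distrib_right)
    ultimately show ?thesis by simp
  qed
  show "w = ucon (1/(2*\<i>)) * (U - ustar U)"
  proof -
    have "U - ustar U = ?c * w + ?c * w"
      unfolding sU by (simp add: U)
    also have "\<dots> = ucon (\<i> + \<i>) * w" by (simp only: ucon_add distrib_right)
    also have "\<dots> = ucon (2 * \<i>) * w" by simp
    finally have "U - ustar U = ucon (2 * \<i>) * w" .
    then show ?thesis by (simp add: mult.assoc[symmetric] ucon_ucon)
  qed
qed

lemma unitary_rel_bnd:
  fixes k \<tau> :: "'a::cstar_algebra"
  assumes "cstar k = k" "cstar \<tau> = \<tau>" "\<tau> * k = k * \<tau>" "\<tau> * \<tau> = 2 *\<^sub>R \<tau> - k * k"
  shows "bnd (uemb k) 1" "bnd (1 - uemb \<tau>) 1"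
proof -
  note u = unitary_rel[OF assms]
  let ?U = "uemb k + ucon \<i> * (1 - uemb \<tau>)"
  have b1: "bnd ?U 1" by (rule bnd_unitary[OF u(1)])
  have b2: "bnd (ustar ?U) 1" by (rule bnd_unitary) (simp add: u(2))
  show "bnd (uemb k) 1" by (subst u(5)) (rule bnd_comb(1)[OF b1 b2], simp)
  show "bnd (1 - uemb \<tau>) 1"
    by (subst u(6)) (rule bnd_comb(2)[OF b1 b2], simp add: norm_divide norm_mult)
qed

section \<open>*-homomorphisms are contractive\<close>

lemma star_hom_props:
  assumes "star_hom \<theta>"
  shows "\<theta> (x + y) = \<theta> x + \<theta> y" "\<theta> (x * y) = \<theta> x * \<theta> y" "\<theta> (cstar x) = cstar (\<theta> x)"
    "\<theta> (scaleC c x) = scaleC c (\<theta> x)" "\<theta> (r *\<^sub>R x) = r *\<^sub>R \<theta> x"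
    "\<theta> 0 = 0" "\<theta> (x - y) = \<theta> x - \<theta> y" "\<theta> (- x) = - \<theta> x"
proof -
  show a: "\<theta> (x + y) = \<theta> x + \<theta> y" for x y using assms by (simp add: star_hom_def)
  show "\<theta> (x * y) = \<theta> x * \<theta> y" using assms by (simp add: star_hom_def)
  show "\<theta> (cstar x) = cstar (\<theta> x)" using assms by (simp add: star_hom_def)
  show "\<theta> (scaleC c x) = scaleC c (\<theta> x)" using assms by (simp add: star_hom_def)
  show "\<theta> (r *\<^sub>R x) = r *\<^sub>R \<theta> x" using assms by (simp add: star_hom_def scaleR_scaleC)
  show z: "\<theta> 0 = 0" using a[of 0 0] by simp
  show m: "\<theta> (- x) = - \<theta> x" for x using a[of x "-x"] z by (simp add: add_eq_0_iff)
  show "\<theta> (x - y) = \<theta> x - \<theta> y" using a[of x "-y"] m[of y] by simp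
qed

lemma star_hom_contr_sa:
  fixes \<theta> :: "'a::cstar_algebra \<Rightarrow> 'b::cstar_algebra"
  assumes "star_hom \<theta>" "cstar h = h" "norm h \<le> 1"
  shows "norm (\<theta> h) \<le> 1"
proof -
  obtain t where t: "cstar t = t" "t * h = h * t" "t * t = 2 *\<^sub>R t - h * h"
    using sqrt_exists[OF assms(3,2)] by blast
  note p = star_hom_props[OF assms(1)]
  have "bnd (uemb (\<theta> h)) 1"
    by (rule unitary_rel_bnd(1)[of _ "\<theta> t"]) (simp_all add: p[symmetric] t assms(2))
  then show ?thesis by (rule bnd_elem) simp
qed

lemma star_hom_contr:
  fixes \<theta> :: "'a::cstar_algebra \<Rightarrow> 'b::cstar_algebra"
  assumes "star_hom \<theta>"
  shows "norm (\<theta> x) \<le> norm x"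
proof (cases "x = 0")
  case True then show ?thesis using star_hom_props(6)[OF assms] by simp
next
  case False
  note p = star_hom_props[OF assms]
  let ?h = "cstar x * x"
  have nh: "norm ?h = (norm x)^2" by (rule cstar_identity)
  then have hpos: "norm ?h > 0" using False by simp
  let ?h' = "(1 / norm ?h) *\<^sub>R ?h"
  have "norm ?h' \<le> 1" using hpos by simp
  moreover have "cstar ?h' = ?h'" by (simp add: cstar_scaleR cstar_mult cstar_cstar)
  ultimately have "norm (\<theta> ?h') \<le> 1" using star_hom_contr_sa[OF assms] by blast
  then have "norm (\<theta> ?h) / norm ?h \<le> 1" by (simp add: p)
  then have "norm (\<theta> ?h) \<le> norm ?h" using hpos by (simp add: divide_le_eq)
  moreover have "norm (\<theta> ?h) = (norm (\<theta> x))^2"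
    by (simp add: p cstar_identity)
  ultimately have "(norm (\<theta> x))^2 \<le> (norm x)^2" using nh by simp
  then show ?thesis by (rule power2_le_imp_le) simp
qed

section \<open>Discrete Parseval and l1 bound\<close>

lemma roots_sum:
  fixes n :: nat and m :: int
  assumes "n > 0" "\<bar>m\<bar> < int n"
  shows "(\<Sum>l<n. cis (2 * pi * real l * of_int m / real n)) = (if m = 0 then of_nat n else 0)"
proof (cases "m = 0")
  case True then show ?thesis by simp
next
  case False
  define x where "x = cis (2 * pi * of_int m / real n)"
  have xl: "cis (2 * pi * real l * of_int m / real n) = x ^ l" for l
  proof -
    have "x ^ l = cis (real l * (2 * pi * of_int m / real n))" by (simp only: x_def Complex.DeMoivre)
    then show ?thesis by (simp add: algebra_simps)
  qed
  have xn: "x ^ n = 1"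
  proof -
    have "x ^ n = cis (2 * pi * of_int m)" using assms(1) by (simp add: x_def Complex.DeMoivre)
    also have "\<dots> = 1" by (rule cis_multiple_2pi) simp
    finally show ?thesis .
  qed
  have x1: "x \<noteq> 1"
  proof
    assume "x = 1"
    then have "Re x = 1" by simp
    then have "cos (2 * pi * of_int m / real n) = 1" unfolding x_def by simp
    then obtain k :: int where k: "2 * pi * of_int m / real n = real_of_int k * 2 * pi"
      by (auto simp: cos_one_2pi_int)
    then have "real_of_int m = real_of_int k * real n" using assms(1) by (simp add: field_simps)
    then have mk: "m = k * int n" by (metis of_int_eq_iff of_int_mult of_int_of_nat_eq)
    show False
    proof (cases "k = 0")
      case True then show False using mk False by simp
    next
      case False
      then have "1 \<le> \<bar>k\<bar>" by linarith
      then have "1 * int n \<le> \<bar>k\<bar> * int n" by (rule mult_right_mono) simp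
      then have "\<bar>k * int n\<bar> \<ge> int n" by (simp add: abs_mult)
      then show False using assms(2) mk by simp
    qed
  qed
  have "(\<Sum>l<n. cis (2 * pi * real l * of_int m / real n)) = (\<Sum>l<n. x ^ l)" by (simp add: xl)
  also have "\<dots> = 0" using x1 xn by (simp add: sum_gp_strict)
  finally show ?thesis using False by simp
qed

lemma parseval:
  fixes q :: "complex poly"
  assumes "degree q < n"
  shows "(\<Sum>l<n. (cmod (poly q (cis (2 * pi * real l / real n))))^2)
       = real n * (\<Sum>i\<le>degree q. (cmod (coeff q i))^2)"
proof -
  define D where "D = degree q"
  define c where "c = coeff q"
  define z where "z l = cis (2 * pi * real l / real n)" for l
  have n0: "n > 0" using assms by simp
  have zz: "z l ^ i * cnj (z l ^ j) = cis (2 * pi * real l * of_int (int i - int j) / real n)" for l i j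
  proof -
    have "z l ^ i * cnj (z l ^ j) = cis (real i * (2 * pi * real l / real n)) * cnj (cis (real j * (2 * pi * real l / real n)))"
      by (simp only: z_def Complex.DeMoivre)
    also have "\<dots> = cis (real i * (2 * pi * real l / real n)) * cis (- (real j * (2 * pi * real l / real n)))"
      by (simp only: cis_cnj)
    also have "\<dots> = cis (2 * pi * real l * of_int (int i - int j) / real n)"
      by (simp add: cis_mult algebra_simps add_divide_distrib diff_divide_distrib)
    finally show ?thesis .
  qed
  have "complex_of_real (\<Sum>l<n. (cmod (poly q (z l)))^2)
      = (\<Sum>l<n. poly q (z l) * cnj (poly q (z l)))"
    by (simp only: of_real_sum complex_norm_square)
  also have "\<dots> = (\<Sum>l<n. \<Sum>i\<le>D. \<Sum>j\<le>D. c i * cnj (c j) * (z l ^ i * cnj (z l ^ j)))"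
    by (simp add: poly_altdef D_def c_def sum_product cnj_sum algebra_simps)
  also have "\<dots> = (\<Sum>i\<le>D. \<Sum>l<n. \<Sum>j\<le>D. c i * cnj (c j) * (z l ^ i * cnj (z l ^ j)))"
    by (rule sum.swap)
  also have "\<dots> = (\<Sum>i\<le>D. \<Sum>j\<le>D. \<Sum>l<n. c i * cnj (c j) * (z l ^ i * cnj (z l ^ j)))"
    by (rule sum.cong[OF refl], rule sum.swap)
  also have "\<dots> = (\<Sum>i\<le>D. \<Sum>j\<le>D. c i * cnj (c j) * (\<Sum>l<n. cis (2 * pi * real l * of_int (int i - int j) / real n)))"
    by (simp only: zz sum_distrib_left)
  also have "\<dots> = (\<Sum>i\<le>D. \<Sum>j\<le>D. c i * cnj (c j) * (if i = j then of_nat n else 0))"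
  proof (intro sum.cong refl)
    fix i j assume "i \<in> {..D}" "j \<in> {..D}"
    then have "\<bar>int i - int j\<bar> < int n" using assms by (auto simp: D_def)
    then show "c i * cnj (c j) * (\<Sum>l<n. cis (2 * pi * real l * of_int (int i - int j) / real n))
       = c i * cnj (c j) * (if i = j then of_nat n else 0)"
      using roots_sum[OF n0, of "int i - int j"] by simp
  qed
  also have "\<dots> = (\<Sum>i\<le>D. c i * cnj (c i) * of_nat n)"
    by (simp add: if_distrib cong: if_cong)
  also have "\<dots> = complex_of_real (real n * (\<Sum>i\<le>D. (cmod (c i))^2))"
    by (simp only: of_real_mult of_real_of_nat_eq of_real_sum complex_norm_square sum_distrib_left)
       (simp add: mult_ac)
  finally show ?thesis unfolding z_def D_def c_def by (simp only: of_real_eq_iff)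
qed

definition l1 :: "complex poly \<Rightarrow> real" where
  "l1 p = (\<Sum>i\<le>degree p. cmod (coeff p i))"

lemma l1_bound:
  fixes q :: "complex poly"
  assumes S: "\<And>z. cmod z = 1 \<Longrightarrow> cmod (poly q z) \<le> S"
  shows "l1 q \<le> sqrt (real (degree q + 1)) * S"
proof -
  define n where "n = degree q + 1"
  have "cmod (poly q 1) \<le> S" by (rule S) simp
  then have S0: "S \<ge> 0" using norm_ge_zero[of "poly q 1"] by linarith
  have "(l1 q)^2 \<le> (\<Sum>i\<le>degree q. (cmod (coeff q i))^2) * real n"
    unfolding l1_def n_def using sum_squared_le_sum_of_squares[of "\<lambda>i. cmod (coeff q i)" "{..degree q}"]
    by simp
  also have "\<dots> = (\<Sum>l<n. (cmod (poly q (cis (2 * pi * real l / real n))))^2)"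
    using parseval[of q n] by (simp add: n_def)
  also have "\<dots> \<le> (\<Sum>l<n. S^2)"
    by (intro sum_mono power_mono S) auto
  also have "\<dots> = (sqrt (real n) * S)^2" by (simp add: power_mult_distrib)
  finally show ?thesis unfolding n_def[symmetric]
    by (rule power2_le_imp_le) (simp add: S0)
qed

section \<open>Evaluation of polynomials at an element of the unitization\<close>

definition E :: "'a::cstar_algebra ue \<Rightarrow> complex poly \<Rightarrow> 'a ue" where
  "E U p = (\<Sum>i\<le>degree p. ucon (coeff p i) * U ^ i)"

lemma E_eq: "degree p < n \<Longrightarrow> E U p = (\<Sum>i<n. ucon (coeff p i) * U ^ i)"
  unfolding E_def
  by (rule sum.mono_neutral_right[symmetric]) (auto simp: coeff_eq_0)

lemma E_zero[simp]: "E U 0 = 0" by (simp add: E_def)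

lemma E_add: "E U (p + q) = E U p + E U q"
proof -
  define n where "n = Suc (max (degree p) (degree q))"
  have "degree (p + q) < n" using degree_add_le_max[of p q] by (simp add: n_def)
  then have "E U (p + q) = (\<Sum>i<n. ucon (coeff (p + q) i) * U ^ i)" by (rule E_eq)
  moreover have "E U p = (\<Sum>i<n. ucon (coeff p i) * U ^ i)" by (rule E_eq) (simp add: n_def)
  moreover have "E U q = (\<Sum>i<n. ucon (coeff q i) * U ^ i)" by (rule E_eq) (simp add: n_def)
  ultimately show ?thesis
    by (simp only: coeff_add ucon_add distrib_right sum.distrib)
qed

lemma ucon_comm_assoc: "ucon c * (V * W) = V * (ucon c * W)"
  by (metis mult.assoc ucon_commute)

lemma E_pCons: "E U (pCons a p) = ucon a + U * E U p"
proof -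
  define d where "d = degree p"
  have "degree (pCons a p) < Suc (Suc d)" using degree_pCons_le[of a p] by (simp add: d_def)
  then have "E U (pCons a p) = (\<Sum>i<Suc (Suc d). ucon (coeff (pCons a p) i) * U ^ i)"
    by (rule E_eq)
  also have "\<dots> = ucon a + (\<Sum>i<Suc d. ucon (coeff p i) * U ^ Suc i)"
    by (simp only: sum.lessThan_Suc_shift) simp
  also have "\<dots> = ucon a + U * (\<Sum>i<Suc d. ucon (coeff p i) * U ^ i)"
    by (simp only: power_Suc ucon_comm_assoc sum_distrib_left)
  also have "\<dots> = ucon a + U * E U p" by (subst E_eq[of _ "Suc d"]) (simp_all add: d_def)
  finally show ?thesis .
qed

lemma E_smult: "E U (smult a p) = ucon a * E U p"
proof -
  have "degree (smult a p) < Suc (degree p)" using degree_smult_le[of a p] by simp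
  then have "E U (smult a p) = (\<Sum>i<Suc (degree p). ucon (coeff (smult a p) i) * U ^ i)" by (rule E_eq)
  also have "\<dots> = (\<Sum>i<Suc (degree p). ucon a * (ucon (coeff p i) * U ^ i))"
    by (simp only: coeff_smult ucon_ucon[symmetric] mult.assoc)
  also have "\<dots> = ucon a * E U p"
    by (simp only: sum_distrib_left[symmetric]) (subst E_eq[of _ "Suc (degree p)"], simp_all)
  finally show ?thesis .
qed

lemma E_mult: "E U (p * q) = E U p * E U q"
proof (induct p rule: pCons_induct)
  case (pCons a p)
  have "E U (pCons a p * q) = ucon a * E U q + U * E U (p * q)"
    by (simp add: mult_pCons_left E_add E_smult E_pCons)
  also have "\<dots> = (ucon a + U * E U p) * E U q"
    by (simp add: pCons distrib_right mult.assoc)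
  finally show ?case by (simp add: E_pCons)
qed simp

lemma E_one[simp]: "E U 1 = 1" by (simp add: E_def)

lemma E_power: "E U (p ^ n) = E U p ^ n"
  by (induct n) (simp_all add: E_mult)

lemma E_comm: "V * U = U * V \<Longrightarrow> E U p * V = V * E U p"
proof (induct p rule: pCons_induct)
  case (pCons a p)
  then show ?case
    by (simp add: E_pCons distrib_left distrib_right ucon_commute mult.assoc)
       (metis mult.assoc)
qed simp

lemma E_bnd:
  assumes "ustar U * U = 1"
  shows "bnd (E U p) (l1 p)"
  unfolding bnd_def
proof
  fix y
  have bu: "norm (act (U ^ i) y) \<le> norm y" for i
    using bnd_power[OF bnd_unitary[OF assms], of i] by (simp add: bnd_def)
  have "norm (act (E U p) y) = norm (\<Sum>i\<le>degree p. scaleC (coeff p i) (act (U ^ i) y))"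
    by (simp add: E_def act_sum act_mult act_ucon)
  also have "\<dots> \<le> (\<Sum>i\<le>degree p. norm (scaleC (coeff p i) (act (U ^ i) y)))"
    by (rule norm_sum)
  also have "\<dots> \<le> (\<Sum>i\<le>degree p. cmod (coeff p i) * norm y)"
    by (intro sum_mono) (simp add: norm_scaleC mult_left_mono bu)
  also have "\<dots> = l1 p * norm y" by (simp add: l1_def sum_distrib_right)
  finally show "norm (act (E U p) y) \<le> l1 p * norm y" .
qed

lemma comm_pow_mult: "(a::'r::monoid_mult) * b = b * a \<Longrightarrow> (a * b) ^ n = a ^ n * b ^ n"
proof (induct n)
  case (Suc n)
  have "(a * b) ^ Suc n = a * b * (a ^ n * b ^ n)" using Suc by simp
  also have "\<dots> = a * (b * a ^ n) * b ^ n" by (simp add: mult.assoc)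
  also have "\<dots> = a * (a ^ n * b) * b ^ n" using power_commuting_commutes[OF Suc.prems, of n] by simp
  also have "\<dots> = a ^ Suc n * b ^ Suc n" by (simp add: mult.assoc power_commutes)
  finally show ?case .
qed simp

lemma mult_ract: "x * ract y P = ract (x * y) P"
  by (simp add: ract_def mult_scaleC_right distrib_left mult.assoc)

lemma ract_act_comm: "uemb x * P = P * uemb x \<Longrightarrow> ract x P = act P x"
proof -
  assume "uemb x * P = P * uemb x"
  then have "uev (uemb x * P) = uev (P * uemb x)" by simp
  then have "x * uev P = uev P * x" by simp
  then show ?thesis by (simp add: ract_def act_def)
qed

lemma act_scaleR: "act P (r *\<^sub>R y) = r *\<^sub>R act P y"
  by (simp add: act_def scaleR_scaleC scaleC_scaleC mult_scaleC_right scaleC_add_right mult.commute)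

lemma ab_bound:
  fixes \<alpha> \<beta> \<eta> :: real
  assumes "\<alpha> \<ge> 0" "\<beta> \<ge> 0" "\<alpha>^2 + \<beta>^2 = 1" "\<eta> \<ge> 0" "\<eta> \<le> 1"
  shows "\<alpha> * \<beta> ^ (2 * N) \<le> \<eta> + (1 - \<eta>^2) ^ N"
proof -
  have "\<alpha>^2 \<le> 1" using assms(3) zero_le_power2[of \<beta>] by linarith
  then have a1: "\<alpha> \<le> 1" using power2_le_imp_le[of \<alpha> 1] by simp
  have "\<beta>^2 \<le> 1" using assms(3) zero_le_power2[of \<alpha>] by linarith
  then have b1: "\<beta> \<le> 1" using power2_le_imp_le[of \<beta> 1] by simp
  have e0: "0 \<le> 1 - \<eta>^2" using assms by (simp add: power_le_one)
  have bb: "\<beta> ^ (2 * N) \<le> 1" using assms b1 by (simp add: power_le_one)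
  have bb0: "\<beta> ^ (2 * N) \<ge> 0" using assms by simp
  show ?thesis
  proof (cases "\<alpha> \<le> \<eta>")
    case True
    have "\<alpha> * \<beta> ^ (2 * N) \<le> \<alpha> * 1" using bb assms by (intro mult_left_mono) auto
    also have "\<dots> \<le> \<eta>" using True by simp
    finally show ?thesis using e0 by (smt (verit) zero_le_power)
  next
    case False
    then have "\<eta>^2 \<le> \<alpha>^2" using assms by (intro power_mono) auto
    then have "\<beta>^2 \<le> 1 - \<eta>^2" using assms(3) by linarith
    then have "(\<beta>^2) ^ N \<le> (1 - \<eta>^2) ^ N" by (intro power_mono) auto
    then have "\<beta> ^ (2 * N) \<le> (1 - \<eta>^2) ^ N" by (simp add: power_mult)
    moreover have "\<alpha> * \<beta> ^ (2 * N) \<le> 1 * \<beta> ^ (2 * N)" using a1 bb0 by (intro mult_right_mono)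
    ultimately show ?thesis using assms by simp
  qed
qed

definition pA :: "complex poly" where "pA = [:1/2, 0, 1/2:]"
definition pB :: "complex poly" where "pB = [:- 1/(2*\<i>), 0, 1/(2*\<i>):]"

lemma pAB_circle:
  assumes "cmod z = 1"
  shows "(cmod (poly pA z))^2 + (cmod (poly pB z))^2 = 1"
proof -
  define w where "w = z * z"
  have w1: "(Re w)^2 + (Im w)^2 = 1"
  proof -
    have "cmod w = 1" using assms by (simp add: w_def norm_mult)
    then show ?thesis using cmod_power2[of w] by simp
  qed
  have pa: "poly pA z = (1 + w) / 2" by (simp add: pA_def w_def field_simps)
  have a: "cmod (poly pA z) = cmod (1 + w) / 2" by (subst pa) (simp add: norm_divide)
  have pb: "poly pB z = (w - 1) / (2 * \<i>)" by (simp add: pB_def w_def field_simps)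
  have b: "cmod (poly pB z) = cmod (w - 1) / 2" by (subst pb) (simp add: norm_divide norm_mult)
  have "(cmod (poly pA z))^2 + (cmod (poly pB z))^2 = ((cmod (1 + w))^2 + (cmod (w - 1))^2) / 4"
    unfolding a b by (simp add: power_divide)
  also have "\<dots> = 1"
  proof -
    have c1: "(cmod (1 + w))^2 = (1 + Re w)^2 + (Im w)^2" by (simp add: cmod_power2)
    have c2: "(cmod (w - 1))^2 = (Re w - 1)^2 + (Im w)^2" by (simp add: cmod_power2)
    show ?thesis unfolding c1 c2 using w1 by (simp add: power2_eq_square algebra_simps)
  qed
  finally show ?thesis .
qed

lemma pQ_bound:
  assumes "cmod z = 1" "\<eta> \<ge> 0" "\<eta> \<le> 1"
  shows "cmod (poly (pA * pB ^ (2 * N)) z) \<le> \<eta> + (1 - \<eta>^2) ^ N"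
  using ab_bound[OF norm_ge_zero norm_ge_zero pAB_circle[OF assms(1)] assms(2,3), of N]
  by (simp add: norm_mult norm_power)

lemma degree_pQ: "degree (pA * pB ^ (2 * N)) \<le> 4 * N + 2"
proof -
  have "degree (pA * pB ^ (2 * N)) \<le> degree pA + degree (pB ^ (2 * N))" by (rule degree_mult_le)
  also have "\<dots> \<le> 2 + 2 * (2 * N)"
  proof -
    have "degree pA \<le> 2" by (simp add: pA_def)
    moreover have "degree (pB ^ (2 * N)) \<le> degree pB * (2 * N)" by (rule degree_power_le)
    moreover have "degree pB \<le> 2" by (simp add: pB_def)
    ultimately show ?thesis by (smt (verit) add_mono mult_le_mono1 order_trans)
  qed
  finally show ?thesis by simp
qed

lemma E_pA: "E U pA = ucon (1/2) + U * U * ucon (1/2)"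
  by (simp add: pA_def E_pCons mult.assoc)
lemma E_pB: "E U pB = ucon (- 1/(2*\<i>)) + U * U * ucon (1/(2*\<i>))"
  by (simp add: pB_def E_pCons mult.assoc)

lemma X_bound:
  fixes h t :: "'a::cstar_algebra"
  assumes sh: "cstar h = h" and st: "cstar t = t" and c: "t * h = h * t"
    and r: "t * t = 2 *\<^sub>R t - h * h" and e0: "\<eta> \<ge> 0" and e1: "\<eta> \<le> 1"
  shows "norm (act ((1 - uemb t) ^ (2 * N)) h) \<le> 2 * (\<eta> + (1 - \<eta>^2) ^ N)"
proof -
  note u = unitary_rel[OF sh st c r]
  define w where "w = 1 - uemb t"
  define K where "K = uemb h"
  define U where "U = uemb h + ucon \<i> * (1 - uemb t)"
  define V where "V = ustar U"
  define S where "S = \<eta> + (1 - \<eta>^2) ^ N"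
  define Q where "Q = pA * pB ^ (2 * N)"
  define D where "D = 2 * N + 1"
  have u1: "V * U = 1" and u2: "U * V = 1" using u(1,2) by (simp_all add: V_def U_def)
  have VU: "V * U = U * V" using u1 u2 by simp
  have Kw: "K * w = w * K" using u(4) by (simp add: K_def w_def)
  have Kdef: "K = ucon (1/2) * (U + V)" using u(5) by (simp add: K_def U_def V_def)
  have wdef: "w = ucon (1/(2*\<i>)) * (U - V)" using u(6) by (simp add: w_def U_def V_def)
  have sK: "ustar K = K" using u(7) by (simp add: K_def)
  have sw: "ustar w = w" using u(3) by (simp add: w_def)
  have S0: "S \<ge> 0"
  proof -
    have "0 \<le> 1 - \<eta>^2" using e0 e1 by (simp add: power_le_one)
    then show ?thesis using e0 by (simp add: S_def)
  qed
  have EV: "E U p * V = V * E U p" for p by (rule E_comm[OF VU])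
  have KA: "V * E U pA = K"
  proof -
    have "V * E U pA = V * ucon (1/2) + (V * U) * U * ucon (1/2)"
      by (simp add: E_pA distrib_left mult.assoc)
    also have "\<dots> = ucon (1/2) * V + ucon (1/2) * U"
      by (simp only: u1 mult_1_left ucon_commute[of "1/2" V, symmetric] ucon_commute[of "1/2" U, symmetric])
    also have "\<dots> = ucon (1/2) * (U + V)" by (simp only: distrib_left add.commute)
    finally show ?thesis using Kdef by simp
  qed
  have wB: "V * E U pB = w"
  proof -
    have "V * E U pB = V * ucon (- 1/(2*\<i>)) + (V * U) * U * ucon (1/(2*\<i>))"
      by (simp add: E_pB distrib_left mult.assoc)
    also have "\<dots> = ucon (1/(2*\<i>)) * (U - V)"
    proof -
      define c where "c = 1/(2*\<i>)"
      have neg: "ucon (- 1/(2*\<i>)) = - ucon c" by (rule ue_eqI) (simp_all add: c_def)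
      have "V * ucon (- 1/(2*\<i>)) + (V * U) * U * ucon (1/(2*\<i>)) = - (V * ucon c) + U * ucon c"
        by (simp only: neg u1 c_def[symmetric] mult_minus_right mult_1_left)
      also have "\<dots> = ucon c * U - ucon c * V"
        by (simp only: ucon_commute[of c V, symmetric] ucon_commute[of c U, symmetric]) simp
      also have "\<dots> = ucon c * (U - V)" by (simp only: right_diff_distrib)
      finally show ?thesis by (simp only: c_def)
    qed
    finally show ?thesis using wdef by simp
  qed
  define X where "X = w ^ (2 * N) * K"
  have XK: "X = K * w ^ (2 * N)"
    unfolding X_def by (rule power_commuting_commutes[OF Kw[symmetric]])
  have Xeq: "X = V ^ D * E U Q"
  proof -
    have "X = (V * E U pA) * (V * E U pB) ^ (2 * N)" using XK KA wB by simp
    also have "\<dots> = (V * E U pA) * (V ^ (2 * N) * E U pB ^ (2 * N))"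
      by (simp add: comm_pow_mult EV)
    also have "\<dots> = V * (E U pA * V ^ (2 * N)) * E U pB ^ (2 * N)" by (simp add: mult.assoc)
    also have "\<dots> = V * (V ^ (2 * N) * E U pA) * E U pB ^ (2 * N)"
    proof -
      have "V ^ (2 * N) * E U pA = E U pA * V ^ (2 * N)"
        by (rule power_commuting_commutes) (rule EV[symmetric])
      then show ?thesis by simp
    qed
    also have "\<dots> = V ^ D * E U Q"
      by (simp add: D_def Q_def E_mult E_power mult.assoc)
    finally show ?thesis .
  qed
  have Xsa: "ustar X = X"
  proof -
    have "ustar X = ustar K * ustar (w ^ (2 * N))" by (simp add: X_def ustar_mult)
    also have "\<dots> = K * w ^ (2 * N)" by (simp add: ustar_power sK sw)
    finally show ?thesis using XK by simp
  qed
  define m where "m = 4 * N + 3"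
  define M where "M = (2::nat) ^ m"
  have mM: "4 * N + 3 \<le> M" unfolding M_def m_def using less_exp[of "4 * N + 3"] by simp
  have MM: "M \<le> 2 ^ M" using less_exp[of M] by simp
  have XM: "X ^ M = V ^ (D * M) * E U (Q ^ M)"
  proof -
    have "V ^ D * E U Q = E U Q * V ^ D" using power_commuting_commutes[OF EV[symmetric]] by simp
    then have "(V ^ D * E U Q) ^ M = (V ^ D) ^ M * E U Q ^ M" by (rule comm_pow_mult)
    then show ?thesis using Xeq by (simp add: power_mult E_power)
  qed
  have bV: "bnd (V ^ (D * M)) 1"
  proof -
    have "ustar V * V = 1" using u2 by (simp add: V_def)
    from bnd_power[OF bnd_unitary[OF this], of "D * M"] show ?thesis by simp
  qed
  have bE: "bnd (E U (Q ^ M)) (l1 (Q ^ M))" by (rule E_bnd) (use u1 in \<open>simp add: V_def\<close>)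
  have l1b: "l1 (Q ^ M) \<le> (2 * S) ^ M"
  proof -
    have "l1 (Q ^ M) \<le> sqrt (real (degree (Q ^ M) + 1)) * S ^ M"
    proof (rule l1_bound)
      fix z :: complex assume "cmod z = 1"
      then have "cmod (poly Q z) \<le> S" unfolding Q_def S_def by (rule pQ_bound[OF _ e0 e1])
      then show "cmod (poly (Q ^ M) z) \<le> S ^ M" by (simp add: norm_power power_mono)
    qed
    also have "\<dots> \<le> 2 ^ M * S ^ M"
    proof (rule mult_right_mono)
      have "degree (Q ^ M) \<le> degree Q * M" by (rule degree_power_le)
      also have "\<dots> \<le> (4 * N + 2) * M" unfolding Q_def by (intro mult_right_mono degree_pQ) simp
      finally have dq: "degree (Q ^ M) \<le> (4 * N + 2) * M" .
      have "(4 * N + 2) * M + 1 \<le> (4 * N + 3) * M" using mM by (simp add: algebra_simps)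
      also have "\<dots> \<le> M * M" using mM by (rule mult_right_mono) simp
      finally have "degree (Q ^ M) + 1 \<le> M * M" using dq by linarith
      also have "\<dots> \<le> 2 ^ M * 2 ^ M" using MM by (intro mult_le_mono) auto
      finally have nn: "degree (Q ^ M) + 1 \<le> 2 ^ M * 2 ^ M" .
      then have "real (degree (Q ^ M) + 1) \<le> real (2 ^ M * 2 ^ M)" by (rule of_nat_mono)
      then have "real (degree (Q ^ M) + 1) \<le> (2 ^ M)^2" by (simp add: power2_eq_square)
      then show "sqrt (real (degree (Q ^ M) + 1)) \<le> 2 ^ M"
        using real_sqrt_le_mono by fastforce
    qed (use S0 in simp)
    finally show ?thesis by (simp add: power_mult_distrib)
  qed
  have "bnd (X ^ M) (1 * l1 (Q ^ M))" unfolding XM by (rule bnd_mult[OF bV bE]) simp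
  then have bXM: "bnd (X ^ (2 ^ m)) ((2 * S) ^ (2 ^ m))"
    using l1b unfolding M_def by (simp add: bnd_mono)
  have bX: "bnd X (2 * S)" using bnd_pow2[OF Xsa _ bXM] S0 by simp
  define Z where "Z = act (w ^ (2 * N)) h"
  have "bnd (uemb Z) (2 * S)"
    unfolding bnd_def
  proof
    fix y
    have "act (uemb Z) y = act X y"
      by (simp add: act_uemb Z_def X_def act_mult K_def act_mult_right[symmetric])
    then show "norm (act (uemb Z) y) \<le> 2 * S * norm y" using bX by (simp add: bnd_def)
  qed
  then have "norm Z \<le> 2 * S" by (rule bnd_elem) (use S0 in simp)
  then show ?thesis by (simp add: Z_def w_def S_def)
qed

lemma single_approx:
  fixes d :: "'a::cstar_algebra"
  assumes "\<delta> > 0"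
  shows "\<exists>C. ues C = 1 \<and> bnd C 1 \<and> norm (act C d) \<le> \<delta>"
proof (cases "d = 0")
  case True
  then show ?thesis using assms by (intro exI[of _ 1]) (simp add: bnd_one act_def)
next
  case False
  define R where "R = (norm d)^2"
  have R0: "R > 0" using False by (simp add: R_def)
  define h where "h = (1 / R) *\<^sub>R (d * cstar d)"
  have sh: "cstar h = h" by (simp add: h_def cstar_scaleR cstar_mult cstar_cstar)
  have nh: "norm h \<le> 1" using R0 by (simp add: h_def cstar_identity2 R_def)
  obtain t where t: "cstar t = t" "t * h = h * t" "t * t = 2 *\<^sub>R t - h * h"
    using sqrt_exists[OF nh sh] by blast
  note u = unitary_rel[OF sh t]
  define w where "w = 1 - uemb t"
  define \<sigma> where "\<sigma> = min 1 (\<delta>^2 / (2 * R))"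
  have s0: "\<sigma> > 0" using R0 assms by (simp add: \<sigma>_def)
  define \<eta> where "\<eta> = \<sigma> / 2"
  have e0: "\<eta> \<ge> 0" "\<eta> \<le> 1" "\<eta> > 0" using s0 by (auto simp: \<eta>_def \<sigma>_def)
  have "1 - \<eta>^2 < 1" using e0 by simp
  then have "\<exists>N. (1 - \<eta>^2) ^ N < \<sigma> / 2" by (intro real_arch_pow_inv) (use s0 in auto)
  then obtain N where N: "(1 - \<eta>^2) ^ N < \<sigma> / 2" by blast
  define W where "W = w ^ N"
  have Xb: "norm (act (w ^ (2 * N)) h) \<le> 2 * (\<eta> + (1 - \<eta>^2) ^ N)"
    unfolding w_def by (rule X_bound[OF sh t e0(1,2)])
  also have "\<dots> \<le> 2 * \<sigma>" using N by (simp add: \<eta>_def)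
  also have "\<dots> \<le> \<delta>^2 / R" using R0 by (simp add: \<sigma>_def)
  finally have Zb: "norm (act (w ^ (2 * N)) h) \<le> \<delta>^2 / R" .
  have Kw: "uemb h * w = w * uemb h" using u(4) by (simp add: w_def)
  have sw: "ustar w = w" using u(3) by (simp add: w_def)
  have bw: "bnd w 1" using unitary_rel_bnd(2)[OF sh t] by (simp add: w_def)
  have sW: "ustar W = W" by (simp add: W_def ustar_power sw)
  have dd: "d * cstar d = R *\<^sub>R h" using R0 by (simp add: h_def)
  have comm: "uemb (d * cstar d) * W = W * uemb (d * cstar d)"
  proof -
    have KW: "uemb h * W = W * uemb h"
      unfolding W_def using power_commuting_commutes[OF Kw[symmetric]] by simp
    have "uemb (d * cstar d) = ucon (complex_of_real R) * uemb h" by (simp add: dd uemb_scaleR)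
    moreover have "ucon (complex_of_real R) * uemb h * W = W * (ucon (complex_of_real R) * uemb h)"
    proof -
      have "ucon (complex_of_real R) * uemb h * W = ucon (complex_of_real R) * (W * uemb h)"
        by (simp only: mult.assoc KW)
      also have "\<dots> = (ucon (complex_of_real R) * W) * uemb h" by (simp only: mult.assoc)
      also have "\<dots> = (W * ucon (complex_of_real R)) * uemb h" by (simp only: ucon_commute)
      also have "\<dots> = W * (ucon (complex_of_real R) * uemb h)" by (simp only: mult.assoc)
      finally show ?thesis .
    qed
    ultimately show ?thesis by simp
  qed
  define g where "g = act W d"
  have "g * cstar g = act W (d * ract (cstar d) W)"
    by (simp add: g_def cstar_act sW act_mult_right)
  also have "\<dots> = act W (act W (d * cstar d))"
    by (simp add: mult_ract ract_act_comm[OF comm])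
  also have "\<dots> = R *\<^sub>R act (w ^ (2 * N)) h"
    by (simp add: act_mult[symmetric] W_def power_add[symmetric] dd act_scaleR mult_2)
  finally have "(norm g)^2 = R * norm (act (w ^ (2 * N)) h)"
    using R0 by (simp add: cstar_identity2[symmetric])
  also have "\<dots> \<le> R * (\<delta>^2 / R)" using Zb R0 by (intro mult_left_mono) auto
  also have "\<dots> = \<delta>^2" using R0 by simp
  finally have ng: "(norm g)^2 \<le> \<delta>^2" .
  have "norm g \<le> \<delta>" by (rule power2_le_imp_le[OF ng]) (use assms in linarith)
  moreover have "ues W = 1" by (simp add: W_def w_def)
  moreover have "bnd W 1" using bnd_power[OF bw, of N] by (simp add: W_def)
  ultimately show ?thesis unfolding g_def by blast
qed

lemma list_approx:
  fixes cs :: "'a::cstar_algebra list"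
  assumes "\<delta> > 0"
  shows "\<exists>P. ues P = 1 \<and> bnd P 1 \<and> (\<forall>c\<in>set cs. norm (act P c) \<le> \<delta>)"
proof (induct cs)
  case Nil
  then show ?case by (intro exI[of _ 1]) (simp add: bnd_one)
next
  case (Cons c cs)
  then obtain P where P: "ues P = 1" "bnd P 1" "\<forall>c\<in>set cs. norm (act P c) \<le> \<delta>" by blast
  obtain C where C: "ues C = 1" "bnd C 1" "norm (act C (act P c)) \<le> \<delta>"
    using single_approx[OF assms] by blast
  have "bnd (C * P) (1 * 1)" by (rule bnd_mult[OF C(2) P(2)]) simp
  moreover have "\<forall>c'\<in>set (c # cs). norm (act (C * P) c') \<le> \<delta>"
  proof
    fix c' assume "c' \<in> set (c # cs)"
    then consider "c' = c" | "c' \<in> set cs" by auto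
    then show "norm (act (C * P) c') \<le> \<delta>"
    proof cases
      case 1 then show ?thesis using C(3) by (simp add: act_mult)
    next
      case 2
      have "norm (act C (act P c')) \<le> 1 * norm (act P c')" using C(2) by (simp add: bnd_def)
      moreover have "norm (act P c') \<le> \<delta>" using P(3) 2 by blast
      ultimately show ?thesis by (simp add: act_mult)
    qed
  qed
  ultimately show ?case using C(1) P(1) by (intro exI[of _ "C * P"]) simp
qed

lemma approx_unit_finite:
  fixes cs :: "'a::cstar_algebra list"
  assumes "\<delta> > 0"
  shows "\<exists>v. norm v \<le> 2 \<and> cstar v = v \<and> (\<forall>c\<in>set cs. norm (v * c - c) \<le> \<delta>)"
proof -
  obtain P where P: "ues P = 1" "bnd P 1" "\<forall>c\<in>set cs. norm (act P c) \<le> \<delta>"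
    using list_approx[OF assms] by blast
  define T where "T = ustar P * P"
  define v where "v = - uev T"
  have uT: "ues T = 1" using P(1) by (simp add: T_def)
  have actT: "act T y = y - v * y" for y by (simp add: act_def uT v_def scaleC_one)
  have bT: "bnd T 1" unfolding T_def using bnd_mult[OF bnd_ustar[OF P(2)] P(2)] by simp
  have sT: "ustar T = T" by (simp add: T_def ustar_mult)
  have sv: "cstar v = v"
  proof -
    have "uev (ustar T) = uev T" using sT by simp
    then show ?thesis by (simp add: v_def cstar_minus)
  qed
  have nv: "norm v \<le> 2"
  proof (rule norm_le_from_mult)
    fix y
    have "v * y = y - act T y" by (simp add: actT)
    then have "norm (v * y) \<le> norm y + norm (act T y)" by (simp add: norm_triangle_ineq4)
    also have "\<dots> \<le> norm y + 1 * norm y" using bT by (simp add: bnd_def)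
    finally show "norm (v * y) \<le> 2 * norm y" by simp
  qed simp
  have "\<forall>c\<in>set cs. norm (v * c - c) \<le> \<delta>"
  proof
    fix c assume "c \<in> set cs"
    have "norm (v * c - c) = norm (act T c)" by (simp add: actT norm_minus_commute)
    also have "\<dots> = norm (act (ustar P) (act P c))" by (simp add: T_def act_mult)
    also have "\<dots> \<le> 1 * norm (act P c)" using bnd_ustar[OF P(2)] by (simp add: bnd_def)
    also have "\<dots> \<le> \<delta>" using P(3) \<open>c \<in> set cs\<close> by simp
    finally show "norm (v * c - c) \<le> \<delta>" .
  qed
  with nv sv show ?thesis by blast
qed

lemma norm3: "norm (x + y + z) \<le> norm x + norm y + norm (z::'a::real_normed_vector)"
  using norm_triangle_ineq[of "x + y" z] norm_triangle_ineq[of x y] by linarith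

lemma approx_unit_seq:
  fixes \<theta> :: "'a::cstar_algebra \<Rightarrow> 'b::cstar_algebra"
  assumes hom: "star_hom \<theta>" and sep: "separable_cstar TYPE('a)"
  shows "\<exists>u::nat \<Rightarrow> 'b. (\<forall>n. norm (u n) \<le> 2) \<and>
     (\<forall>a. (\<lambda>n. u n * \<theta> a) \<longlonglongrightarrow> \<theta> a) \<and> (\<forall>a. (\<lambda>n. \<theta> a * u n) \<longlonglongrightarrow> \<theta> a)"
proof -
  obtain D :: "'a set" where D: "countable D" "closure D = UNIV"
    using sep unfolding separable_cstar_def by blast
  have Dne: "D \<noteq> {}" using D(2) by auto
  define f where "f = from_nat_into D"
  have rf: "range f = D" unfolding f_def by (rule range_from_nat_into[OF Dne D(1)])
  define L where "L n = map (\<lambda>k. \<theta> (f k)) [0..<Suc n] @ map (\<lambda>k. cstar (\<theta> (f k))) [0..<Suc n]" for n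
  have "\<forall>n. \<exists>v. norm v \<le> 2 \<and> cstar v = v \<and> (\<forall>c\<in>set (L n). norm (v * c - c) \<le> 1 / real (Suc n))"
    by (intro allI approx_unit_finite) simp
  then obtain u where u: "\<And>n. norm (u n) \<le> 2" "\<And>n. cstar (u n) = u n"
    "\<And>n c. c \<in> set (L n) \<Longrightarrow> norm (u n * c - c) \<le> 1 / real (Suc n)"
    by metis
  have left: "norm (u n * \<theta> (f k) - \<theta> (f k)) \<le> 1 / real (Suc n)" if "k \<le> n" for n k
  proof -
    have "\<theta> (f k) \<in> set (L n)" using that unfolding L_def set_append set_map
      by (intro UnI1 imageI) (simp del: upt_Suc)
    then show ?thesis by (rule u(3))
  qed
  have right: "norm (\<theta> (f k) * u n - \<theta> (f k)) \<le> 1 / real (Suc n)" if "k \<le> n" for n k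
  proof -
    have "norm (\<theta> (f k) * u n - \<theta> (f k)) = norm (cstar (\<theta> (f k) * u n - \<theta> (f k)))" by simp
    also have "\<dots> = norm (u n * cstar (\<theta> (f k)) - cstar (\<theta> (f k)))"
      by (simp add: cstar_diff cstar_mult u(2))
    also have "\<dots> \<le> 1 / real (Suc n)"
    proof -
      have "cstar (\<theta> (f k)) \<in> set (L n)" using that unfolding L_def set_append set_map
        by (intro UnI2 imageI) (simp del: upt_Suc)
      then show ?thesis by (rule u(3))
    qed
    finally show ?thesis .
  qed
  have contr: "norm (\<theta> x - \<theta> y) \<le> norm (x - y)" for x y
    using star_hom_contr[OF hom, of "x - y"] by (simp add: star_hom_props[OF hom])
  have conv: "(\<lambda>n. u n * \<theta> a) \<longlonglongrightarrow> \<theta> a \<and> (\<lambda>n. \<theta> a * u n) \<longlonglongrightarrow> \<theta> a" for a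
  proof -
    have key: "\<exists>N. \<forall>n\<ge>N. norm (u n * \<theta> a - \<theta> a) < r \<and> norm (\<theta> a * u n - \<theta> a) < r"
      if r: "r > 0" for r
    proof -
      have "a \<in> closure D" using D(2) by simp
      then obtain d where d: "d \<in> D" "dist d a < r / 4"
        using r unfolding closure_approachable by (meson zero_less_divide_iff zero_less_numeral)
      obtain k where k: "d = f k" using d(1) rf by blast
      obtain N0 where N0: "1 / real (Suc N0) < r / 4"
        using r by (metis nat_approx_posE zero_less_divide_iff zero_less_numeral)
      define N where "N = max k N0"
      have ad: "norm (\<theta> a - \<theta> d) < r / 4"
        using contr[of a d] d(2) by (simp add: dist_norm norm_minus_commute)
      show ?thesis
      proof (intro exI[of _ N] allI impI conjI)
        fix n assume "n \<ge> N"
        then have kn: "k \<le> n" and nN: "N0 \<le> n" by (auto simp: N_def)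
        have inv: "1 / real (Suc n) < r / 4"
          using N0 nN by (smt (verit) frac_le of_nat_0_less_iff of_nat_mono zero_less_Suc Suc_le_mono)
        have un: "norm (u n * (\<theta> a - \<theta> d)) \<le> 2 * (r / 4)"
        proof -
          have "norm (u n * (\<theta> a - \<theta> d)) \<le> norm (u n) * norm (\<theta> a - \<theta> d)" by (rule norm_mult_ineq)
          also have "\<dots> \<le> 2 * (r / 4)" using r by (intro mult_mono[OF u(1)[of n] less_imp_le[OF ad]]) simp_all
          finally show ?thesis .
        qed
        have nu: "norm ((\<theta> a - \<theta> d) * u n) \<le> 2 * (r / 4)"
        proof -
          have "norm ((\<theta> a - \<theta> d) * u n) \<le> norm (\<theta> a - \<theta> d) * norm (u n)" by (rule norm_mult_ineq)
          also have "\<dots> \<le> (r / 4) * 2" using r by (intro mult_mono[OF less_imp_le[OF ad] u(1)[of n]]) simp_all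
          finally show ?thesis by simp
        qed
        have e1: "u n * \<theta> a - \<theta> a = u n * (\<theta> a - \<theta> d) + (u n * \<theta> d - \<theta> d) + (\<theta> d - \<theta> a)"
          by (simp add: algebra_simps)
        have "norm (u n * \<theta> a - \<theta> a) \<le> norm (u n * (\<theta> a - \<theta> d)) + norm (u n * \<theta> d - \<theta> d) + norm (\<theta> d - \<theta> a)"
          unfolding e1 by (rule norm3)
        moreover have "norm (u n * \<theta> d - \<theta> d) \<le> 1 / real (Suc n)" using left[OF kn] k by simp
        moreover have "norm (\<theta> d - \<theta> a) < r / 4" using ad by (simp add: norm_minus_commute)
        ultimately show "norm (u n * \<theta> a - \<theta> a) < r" using un inv by linarith
        have e2: "\<theta> a * u n - \<theta> a = (\<theta> a - \<theta> d) * u n + (\<theta> d * u n - \<theta> d) + (\<theta> d - \<theta> a)"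
          by (simp add: algebra_simps)
        have "norm (\<theta> a * u n - \<theta> a) \<le> norm ((\<theta> a - \<theta> d) * u n) + norm (\<theta> d * u n - \<theta> d) + norm (\<theta> d - \<theta> a)"
          unfolding e2 by (rule norm3)
        moreover have "norm (\<theta> d * u n - \<theta> d) \<le> 1 / real (Suc n)" using right[OF kn] k by simp
        moreover have "norm (\<theta> d - \<theta> a) < r / 4" using ad by (simp add: norm_minus_commute)
        ultimately show "norm (\<theta> a * u n - \<theta> a) < r" using nu inv by linarith
      qed
    qed
    show ?thesis
    proof
      show "(\<lambda>n. u n * \<theta> a) \<longlonglongrightarrow> \<theta> a"
      proof (rule LIMSEQ_I)
        fix r :: real assume "r > 0"
        then show "\<exists>no. \<forall>n\<ge>no. norm (u n * \<theta> a - \<theta> a) < r" using key by blast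
      qed
      show "(\<lambda>n. \<theta> a * u n) \<longlonglongrightarrow> \<theta> a"
      proof (rule LIMSEQ_I)
        fix r :: real assume "r > 0"
        then show "\<exists>no. \<forall>n\<ge>no. norm (\<theta> a * u n - \<theta> a) < r" using key by blast
      qed
    qed
  qed
  show ?thesis using u(1) conv by blast
qed

lemma bdd_mult_null_left:
  fixes x y :: "nat \<Rightarrow> 'a::real_normed_algebra"
  assumes "\<And>n. norm (x n) \<le> B" "y \<longlonglongrightarrow> 0"
  shows "(\<lambda>n. x n * y n) \<longlonglongrightarrow> 0"
proof (rule Lim_null_comparison)
  show "\<forall>\<^sub>F n in sequentially. norm (x n * y n) \<le> B * norm (y n)"
    using assms(1) by (intro always_eventually allI) (meson norm_ge_zero norm_mult_ineq mult_right_mono order_trans)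
  show "(\<lambda>n. B * norm (y n)) \<longlonglongrightarrow> 0"
    by (rule tendsto_mult_right_zero) (rule tendsto_norm_zero[OF assms(2)])
qed

lemma bdd_mult_null_right:
  fixes x y :: "nat \<Rightarrow> 'a::real_normed_algebra"
  assumes "\<And>n. norm (x n) \<le> B" "y \<longlonglongrightarrow> 0"
  shows "(\<lambda>n. y n * x n) \<longlonglongrightarrow> 0"
proof (rule Lim_null_comparison)
  show "\<forall>\<^sub>F n in sequentially. norm (y n * x n) \<le> B * norm (y n)"
    using assms(1) by (intro always_eventually allI)
      (metis mult.commute norm_ge_zero norm_mult_ineq mult_left_mono order_trans)
  show "(\<lambda>n. B * norm (y n)) \<longlonglongrightarrow> 0"
    by (rule tendsto_mult_right_zero) (rule tendsto_norm_zero[OF assms(2)])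
qed

lemma bounded_range_norm: "bounded (range x) \<Longrightarrow> \<exists>B. \<forall>n. norm (x n) \<le> B"
  by (auto simp: bounded_iff)

theorem lemma4p4:
  fixes \<theta> :: "'a::cstar_algebra \<Rightarrow> 'b::cstar_algebra"
  assumes "star_hom \<theta>"
    and "separable_cstar TYPE('a)"
    and "Oinf_stable \<theta>"
  shows "\<forall>a. positive (\<theta> a) \<and> \<theta> a \<noteq> 0 \<longrightarrow> properly_infinite (\<theta> a)"
proof (intro allI impI)
  fix a assume A: "positive (\<theta> a) \<and> \<theta> a \<noteq> 0"
  define b where "b = \<theta> a"
  obtain e :: "nat \<Rightarrow> 'b" and s :: "nat \<Rightarrow> nat \<Rightarrow> 'b" where
    e_rc: "rel_comm \<theta> e" and unit: "\<And>x. rel_comm \<theta> x \<Longrightarrow> ann \<theta> (\<lambda>n. e n * x n - x n)"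
    and s_rc: "\<And>i. rel_comm \<theta> (s i)"
    and s_ann: "\<And>i j. ann \<theta> (\<lambda>n. cstar (s i n) * s j n - (if i = j then e n else 0))"
    using assms(3) unfolding Oinf_stable_def by blast
  obtain u :: "nat \<Rightarrow> 'b" where u: "\<And>n. norm (u n) \<le> 2"
    "\<And>a. (\<lambda>n. u n * \<theta> a) \<longlonglongrightarrow> \<theta> a" "\<And>a. (\<lambda>n. \<theta> a * u n) \<longlonglongrightarrow> \<theta> a"
    using approx_unit_seq[OF assms(1,2)] by blast
  have u_rc: "rel_comm \<theta> u"
    unfolding rel_comm_def
  proof
    show "bounded (range u)" using u(1) by (auto simp: bounded_iff)
    show "\<forall>a. (\<lambda>n. u n * \<theta> a - \<theta> a * u n) \<longlonglongrightarrow> 0"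
    proof
      fix a'
      have "(\<lambda>n. (u n * \<theta> a' - \<theta> a') - (\<theta> a' * u n - \<theta> a')) \<longlonglongrightarrow> 0 - 0"
        by (intro tendsto_diff LIM_zero u(2,3))
      then show "(\<lambda>n. u n * \<theta> a' - \<theta> a' * u n) \<longlonglongrightarrow> 0" by simp
    qed
  qed
  have eu: "(\<lambda>n. (e n * u n - u n) * b) \<longlonglongrightarrow> 0"
    using unit[OF u_rc] unfolding ann_def b_def by blast
  obtain Be where Be: "\<And>n. norm (e n) \<le> Be"
    using e_rc bounded_range_norm[of e] unfolding rel_comm_def by blast
  have eb: "(\<lambda>n. e n * b - b) \<longlonglongrightarrow> 0"
  proof -
    have t1: "(\<lambda>n. e n * (b - u n * b)) \<longlonglongrightarrow> 0"
    proof (rule bdd_mult_null_left[OF Be])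
      have "(\<lambda>n. - (u n * b - b)) \<longlonglongrightarrow> - 0"
        unfolding b_def by (intro tendsto_minus LIM_zero u(2))
      then show "(\<lambda>n. b - u n * b) \<longlonglongrightarrow> 0" by simp
    qed
    have t3: "(\<lambda>n. u n * b - b) \<longlonglongrightarrow> 0" unfolding b_def by (intro LIM_zero u(2))
    have "(\<lambda>n. e n * (b - u n * b) + (e n * u n - u n) * b + (u n * b - b)) \<longlonglongrightarrow> 0 + 0 + 0"
      by (intro tendsto_add t1 eu t3)
    moreover have "e n * (b - u n * b) + (e n * u n - u n) * b + (u n * b - b) = e n * b - b" for n
      by (simp add: algebra_simps)
    ultimately show ?thesis by simp
  qed
  have key: "(\<lambda>n. cstar (s p n) * b * s q n) \<longlonglongrightarrow> (if p = q then b else 0)" for p q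
  proof -
    obtain Bp where Bp: "\<And>n. norm (s p n) \<le> Bp"
      using s_rc[of p] bounded_range_norm[of "s p"] unfolding rel_comm_def by blast
    have Bp': "\<And>n. norm (cstar (s p n)) \<le> Bp" using Bp by simp
    have c1: "(\<lambda>n. cstar (s p n) * (b * s q n - s q n * b)) \<longlonglongrightarrow> 0"
    proof (rule bdd_mult_null_left[OF Bp'])
      have "(\<lambda>n. s q n * \<theta> a - \<theta> a * s q n) \<longlonglongrightarrow> 0"
        using s_rc[of q] unfolding rel_comm_def by blast
      then have "(\<lambda>n. - (s q n * \<theta> a - \<theta> a * s q n)) \<longlonglongrightarrow> - 0" by (rule tendsto_minus)
      then show "(\<lambda>n. b * s q n - s q n * b) \<longlonglongrightarrow> 0" by (simp add: b_def)
    qed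
    have c2: "(\<lambda>n. (cstar (s p n) * s q n - (if p = q then e n else 0)) * b) \<longlonglongrightarrow> 0"
      using s_ann[of p q] unfolding ann_def b_def by blast
    show ?thesis
    proof (cases "p = q")
      case True
      have "(\<lambda>n. cstar (s p n) * (b * s q n - s q n * b) + (cstar (s p n) * s q n - e n) * b + (e n * b - b))
          \<longlonglongrightarrow> 0 + 0 + 0"
        using c1 c2 eb True by (intro tendsto_add) simp_all
      moreover have "cstar (s p n) * (b * s q n - s q n * b) + (cstar (s p n) * s q n - e n) * b + (e n * b - b)
          = cstar (s p n) * b * s q n - b" for n
        by (simp add: algebra_simps)
      ultimately have "(\<lambda>n. cstar (s p n) * b * s q n - b) \<longlonglongrightarrow> 0" by simp
      then show ?thesis using True by (simp add: LIM_zero_cancel)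
    next
      case False
      have "(\<lambda>n. cstar (s p n) * (b * s q n - s q n * b) + (cstar (s p n) * s q n) * b) \<longlonglongrightarrow> 0 + 0"
        using c1 c2 False by (intro tendsto_add) simp_all
      moreover have "cstar (s p n) * (b * s q n - s q n * b) + (cstar (s p n) * s q n) * b
          = cstar (s p n) * b * s q n" for n
        by (simp add: algebra_simps)
      ultimately show ?thesis using False by simp
    qed
  qed
  define idx :: "bool \<Rightarrow> nat" where "idx i = (if i then 1 else 0)" for i
  define z :: "nat \<Rightarrow> 'b m2" where "z n = (\<lambda>i j. if i then 0 else s (idx j) n)" for n
  have "cuntz_below (m2_diag b b) (m2_diag b 0)"
    unfolding cuntz_below_def
  proof (intro exI[of _ z] allI)
    fix i j
    have eq: "m2_mult (m2_mult (m2_star (z n)) (m2_diag b 0)) (z n) i j = cstar (s (idx i) n) * b * s (idx j) n" for n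
      by (simp add: m2_mult_def m2_star_def m2_diag_def z_def)
    have ij: "(idx i = idx j) = (i = j)" by (simp add: idx_def)
    have "m2_diag b b i j = (if idx i = idx j then b else 0)" by (simp add: m2_diag_def ij)
    then show "(\<lambda>n. m2_mult (m2_mult (m2_star (z n)) (m2_diag b 0)) (z n) i j) \<longlonglongrightarrow> m2_diag b b i j"
      unfolding eq using key[of "idx i" "idx j"] by simp
  qed
  then show "properly_infinite (\<theta> a)" using A unfolding properly_infinite_def b_def by simp
qed

end
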